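(* Let $(\mathcal{P},d)$ be a 1-2-metric and $\alpha>0$. In the greedy-routing network creation game on $(\mathcal{P},d)$ with edge price $\alpha$, every Nash equilibrium is a social optimum, and every social optimum is a Nash equilibrium.
   Context: A 1-2-metric is a finite metric space $(\mathcal{P},d)$ with $d(u,v)\in\{1,2\}$ for all distinct $u,v$. Game: the agents are the points of $\mathcal{P}$ ($n=|\mathcal{P}|\ge2$). A strategy of agent $u$ is a set $S_u\subseteq\mathcal{P}\setminus\{u\}$; a strategy profile is $\mathbf{s}=(S_u)_{u\in\mathcal{P}}$, and $(S'_u,\mathbf{s}_{-u})$ denotes $\mathbf{s}$ with $S_u$ replaced by $S'_u$. The profile defines the directed network $G(\mathbf{s})$ on $\mathcal{P}$ with arcs $(u,v)$ for $v\in S_u$, arc $(u,v)$ having length $d(u,v)$. A greedy path from $u$ to $v$ in $G$ is a directed path $u=x_1,\dots,x_j=v$ of arcs of $G$ with $d(x_i,v)>d(x_{i+1},v)$ for all $i$; its length is the sum of its arc lengths. $\mathrm{stretch}_{G}(u,v)$ equals the minimum length of a greedy path from $u$ to $v$ divided by $d(u,v)$ if such a path exists, and equals $Z$ otherwise, where $Z$ is a fixed, sufficiently large penalty constant. The cost of agent $u$ is $c_u(\mathbf{s})=\sum_{v\neq u}\mathrm{stretch}_{G(\mathbf{s})}(u,v)+\alpha|S_u|$, the social cost is $\sum_u c_u(\mathbf{s})$, and a social optimum is a profile of minimum social cost. A Nash equilibrium (NE) is a profile $\mathbf{s}$ such that $c_u(\mathbf{s})\le c_u(S'_u,\mathbf{s}_{-u})$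 for every agent $u$ and every $S'_u\subseteq\mathcal{P}\setminus\{u\}$. *)

theory Defs
  imports Complex_Main
begin

definition one_two_metric :: "'a set \<Rightarrow> ('a \<Rightarrow> 'a \<Rightarrow> real) \<Rightarrow> bool" where
  "one_two_metric P d \<longleftrightarrow>
     (\<forall>u\<in>P. d u u = 0) \<and>
     (\<forall>u\<in>P. \<forall>v\<in>P. d u v = d v u) \<and>
     (\<forall>u\<in>P. \<forall>v\<in>P. u \<noteq> v \<longrightarrow> d u v \<in> {1, 2}) \<and>
     (\<forall>u\<in>P. \<forall>v\<in>P. \<forall>w\<in>P. d u w \<le> d u v + d v w)"

definition valid_profile :: "'a set \<Rightarrow> ('a \<Rightarrow> 'a set) \<Rightarrow> bool" where
  "valid_profile P s \<longleftrightarrow> (\<forall>u\<in>P. s u \<subseteq> P - {u})"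

definition greedy_path ::
  "'a set \<Rightarrow> ('a \<Rightarrow> 'a \<Rightarrow> real) \<Rightarrow> ('a \<Rightarrow> 'a set) \<Rightarrow> 'a \<Rightarrow> 'a \<Rightarrow> 'a list \<Rightarrow> bool" where
  "greedy_path P d s u v xs \<longleftrightarrow>
     xs \<noteq> [] \<and> hd xs = u \<and> last xs = v \<and> set xs \<subseteq> P \<and>
     (\<forall>i. Suc i < length xs \<longrightarrow>
          xs ! Suc i \<in> s (xs ! i) \<and> d (xs ! Suc i) v < d (xs ! i) v)"

definition path_length :: "('a \<Rightarrow> 'a \<Rightarrow> real) \<Rightarrow> 'a list \<Rightarrow> real" where
  "path_length d xs = (\<Sum>i<length xs - 1. d (xs ! i) (xs ! Suc i))"

definition stretch ::
  "real \<Rightarrow> 'a set \<Rightarrow> ('a \<Rightarrow> 'a \<Rightarrow> real) \<Rightarrow> ('a \<Rightarrow> 'a set) \<Rightarrow> 'a \<Rightarrow> 'a \<Rightarrow> real" where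
  "stretch Z P d s u v =
     (if \<exists>xs. greedy_path P d s u v xs
      then Min {path_length d xs | xs. greedy_path P d s u v xs} / d u v
      else Z)"

definition agent_cost ::
  "real \<Rightarrow> real \<Rightarrow> 'a set \<Rightarrow> ('a \<Rightarrow> 'a \<Rightarrow> real) \<Rightarrow> ('a \<Rightarrow> 'a set) \<Rightarrow> 'a \<Rightarrow> real" where
  "agent_cost Z \<alpha> P d s u =
     (\<Sum>v\<in>P - {u}. stretch Z P d s u v) + \<alpha> * real (card (s u))"

definition social_cost ::
  "real \<Rightarrow> real \<Rightarrow> 'a set \<Rightarrow> ('a \<Rightarrow> 'a \<Rightarrow> real) \<Rightarrow> ('a \<Rightarrow> 'a set) \<Rightarrow> real" where
  "social_cost Z \<alpha> P d s = (\<Sum>u\<in>P. agent_cost Z \<alpha> P d s u)"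

definition social_optimum ::
  "real \<Rightarrow> real \<Rightarrow> 'a set \<Rightarrow> ('a \<Rightarrow> 'a \<Rightarrow> real) \<Rightarrow> ('a \<Rightarrow> 'a set) \<Rightarrow> bool" where
  "social_optimum Z \<alpha> P d s \<longleftrightarrow> valid_profile P s \<and>
     (\<forall>s'. valid_profile P s' \<longrightarrow> social_cost Z \<alpha> P d s \<le> social_cost Z \<alpha> P d s')"

definition nash_equilibrium ::
  "real \<Rightarrow> real \<Rightarrow> 'a set \<Rightarrow> ('a \<Rightarrow> 'a \<Rightarrow> real) \<Rightarrow> ('a \<Rightarrow> 'a set) \<Rightarrow> bool" where
  "nash_equilibrium Z \<alpha> P d s \<longleftrightarrow> valid_profile P s \<and>
     (\<forall>u\<in>P. \<forall>S'. S' \<subseteq> P - {u} \<longrightarrow>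
        agent_cost Z \<alpha> P d s u \<le> agent_cost Z \<alpha> P d (s(u := S')) u)"

end

theory Submission imports Defs begin

lemma m_d0: "one_two_metric P d \<Longrightarrow> x \<in> P \<Longrightarrow> d x x = 0"
  by (simp add: one_two_metric_def)
lemma m_dne: "one_two_metric P d \<Longrightarrow> x \<in> P \<Longrightarrow> y \<in> P \<Longrightarrow> x \<noteq> y \<Longrightarrow> d x y = 1 \<or> d x y = 2"
  by (auto simp add: one_two_metric_def)
lemma m_nn: "one_two_metric P d \<Longrightarrow> x \<in> P \<Longrightarrow> y \<in> P \<Longrightarrow> 0 \<le> d x y \<and> d x y \<le> 2"
  by (cases "x = y") (auto dest: m_d0 m_dne)
lemma m_vals: "one_two_metric P d \<Longrightarrow> x \<in> P \<Longrightarrow> y \<in> P \<Longrightarrow> d x y = 0 \<or> d x y = 1 \<or> d x y = 2"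
  by (cases "x = y") (auto dest: m_d0 m_dne)
lemma m_step: "one_two_metric P d \<Longrightarrow> x \<in> P \<Longrightarrow> y \<in> P \<Longrightarrow> v \<in> P \<Longrightarrow> d y v < d x v \<Longrightarrow> d y v \<le> d x v - 1"
  using m_vals[of P d x v] m_vals[of P d y v] by auto
lemma m_lt1: "one_two_metric P d \<Longrightarrow> y \<in> P \<Longrightarrow> v \<in> P \<Longrightarrow> d y v < 1 \<Longrightarrow> y = v"
  by (cases "y = v") (auto dest: m_dne)

lemma gp_set: "greedy_path P d s u v xs \<Longrightarrow> i < length xs \<Longrightarrow> xs ! i \<in> P"
  unfolding greedy_path_def by (meson nth_mem subsetD)

lemma gp_bound:
  assumes M: "one_two_metric P d" and "u \<in> P" "v \<in> P" and g: "greedy_path P d s u v xs"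
  shows "i < length xs \<Longrightarrow> d (xs ! i) v \<le> 2 - real i"
proof (induction i)
  case 0
  have "xs ! 0 = u" using g unfolding greedy_path_def by (metis hd_conv_nth)
  then show ?case using m_nn[OF M \<open>u\<in>P\<close> \<open>v\<in>P\<close>] by simp
next
  case (Suc i)
  have lt: "d (xs ! Suc i) v < d (xs ! i) v" using g Suc.prems unfolding greedy_path_def by blast
  have "d (xs ! Suc i) v \<le> d (xs ! i) v - 1"
    by (rule m_step[OF M gp_set[OF g] gp_set[OF g] \<open>v\<in>P\<close> lt]) (use Suc.prems in auto)
  then show ?case using Suc by simp
qed

lemma gp_len:
  assumes M: "one_two_metric P d" and "u \<in> P" "v \<in> P" and g: "greedy_path P d s u v xs"
  shows "length xs \<le> 3"
proof -
  have ne: "xs \<noteq> []" using g unfolding greedy_path_def by simp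
  let ?i = "length xs - 1"
  have "d (xs ! ?i) v \<le> 2 - real ?i" using gp_bound[OF assms, of ?i] ne by simp
  moreover have "0 \<le> d (xs ! ?i) v" using m_nn[OF M gp_set[OF g, of ?i] \<open>v\<in>P\<close>] ne by simp
  ultimately show ?thesis by linarith
qed

lemma gp_finite:
  assumes M: "one_two_metric P d" and "finite P" "u \<in> P" "v \<in> P"
  shows "finite {xs. greedy_path P d s u v xs}"
proof (rule finite_subset[OF _ finite_lists_length_le[OF \<open>finite P\<close>, of 3]])
  show "{xs. greedy_path P d s u v xs} \<subseteq> {xs. set xs \<subseteq> P \<and> length xs \<le> 3}"
    using gp_len[OF M \<open>u\<in>P\<close> \<open>v\<in>P\<close>] by (auto simp: greedy_path_def)
qed

lemma pl_nn: "one_two_metric P d \<Longrightarrow> set xs \<subseteq> P \<Longrightarrow> 0 \<le> path_length d xs"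
  unfolding path_length_def
proof (rule sum_nonneg)
  fix i assume M: "one_two_metric P d" and S: "set xs \<subseteq> P" and i: "i \<in> {..<length xs - 1}"
  then have "xs ! i \<in> P" "xs ! Suc i \<in> P" by (auto intro!: subsetD[OF S] nth_mem)
  then show "0 \<le> d (xs ! i) (xs ! Suc i)" using m_nn[OF M] by blast
qed

lemma L_eq: "{path_length d xs | xs. greedy_path P d s u v xs} = path_length d ` {xs. greedy_path P d s u v xs}"
  by auto

lemma stretch_nn:
  assumes M: "one_two_metric P d" and "finite P" "u \<in> P" "v \<in> P" "u \<noteq> v" "Z \<ge> 0"
  shows "0 \<le> stretch Z P d s u v"
proof (cases "\<exists>xs. greedy_path P d s u v xs")
  case True
  let ?L = "{path_length d xs | xs. greedy_path P d s u v xs}"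
  have fin: "finite ?L" unfolding L_eq using gp_finite[OF M \<open>finite P\<close> \<open>u\<in>P\<close> \<open>v\<in>P\<close>] by simp
  have ne: "?L \<noteq> {}" using True by auto
  have "Min ?L \<in> ?L" using Min_in[OF fin ne] .
  then have "0 \<le> Min ?L" using pl_nn[OF M] by (auto simp: greedy_path_def)
  moreover have "0 \<le> d u v" using m_nn[OF M \<open>u\<in>P\<close> \<open>v\<in>P\<close>] by simp
  ultimately show ?thesis using True by (simp add: stretch_def)
next
  case False then show ?thesis using assms by (simp add: stretch_def)
qed

lemma stretch_le1:
  assumes M: "one_two_metric P d" and "finite P" "u \<in> P" "v \<in> P" "u \<noteq> v" "v \<in> s u"
  shows "stretch Z P d s u v \<le> 1"
proof -
  have dp: "d u v > 0" using m_dne[OF M \<open>u\<in>P\<close> \<open>v\<in>P\<close> \<open>u\<noteq>v\<close>] by auto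
  have g: "greedy_path P d s u v [u, v]" using assms dp m_d0[OF M \<open>v\<in>P\<close>]
    unfolding greedy_path_def by (auto simp: less_Suc_eq)
  let ?L = "{path_length d xs | xs. greedy_path P d s u v xs}"
  have fin: "finite ?L" unfolding L_eq using gp_finite[OF M \<open>finite P\<close> \<open>u\<in>P\<close> \<open>v\<in>P\<close>] by simp
  have "path_length d [u,v] \<in> ?L" using g by blast
  then have "Min ?L \<le> d u v" using Min_le[OF fin] by (simp add: path_length_def)
  then show ?thesis using g dp by (auto simp: stretch_def)
qed

lemma stretch_Z:
  assumes M: "one_two_metric P d" and "u \<in> P" "v \<in> P" "d u v = 1" "v \<notin> s u"
  shows "stretch Z P d s u v = Z"
proof -
  have "\<not> greedy_path P d s u v xs" for xs
  proof
    assume g: "greedy_path P d s u v xs"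
    have uv: "u \<noteq> v" using assms m_d0[OF M] by auto
    have "length xs \<noteq> 1"
    proof
      assume "length xs = 1"
      then obtain a where "xs = [a]" by (cases xs) auto
      then show False using g uv by (auto simp add: greedy_path_def)
    qed
    then have l: "Suc 0 < length xs" using g by (cases xs) (auto simp: greedy_path_def)
    have h0: "xs ! 0 = u" using g unfolding greedy_path_def by (metis hd_conv_nth)
    have "xs ! 1 \<in> s u" "d (xs ! 1) v < 1" using g l h0 assms unfolding greedy_path_def by auto
    moreover have "xs ! 1 = v" using m_lt1[OF M gp_set[OF g l] \<open>v\<in>P\<close>] calculation by simp
    ultimately show False using assms by simp
  qed
  then show ?thesis by (simp add: stretch_def)
qed

definition goodex :: "'a set \<Rightarrow> ('a \<Rightarrow> 'a \<Rightarrow> real) \<Rightarrow> ('a \<Rightarrow> 'a set) \<Rightarrow> 'a \<Rightarrow> bool" where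
  "goodex P d s u \<longleftrightarrow> (\<forall>x\<in>P. x \<noteq> u \<longrightarrow> (\<forall>v\<in>P. d x v = 1 \<longrightarrow> v \<in> s x))"
definition good :: "'a set \<Rightarrow> ('a \<Rightarrow> 'a \<Rightarrow> real) \<Rightarrow> ('a \<Rightarrow> 'a set) \<Rightarrow> bool" where
  "good P d s \<longleftrightarrow> (\<forall>x\<in>P. \<forall>v\<in>P. d x v = 1 \<longrightarrow> v \<in> s x)"

lemma gp_mono:
  assumes M: "one_two_metric P d" and "u \<in> P" "v \<in> P" and ge: "goodex P d s' u" and eq: "s u = s' u"
    and g: "greedy_path P d s u v xs"
  shows "greedy_path P d s' u v xs"
  unfolding greedy_path_def
proof (intro conjI allI impI)
  show "xs \<noteq> []" "hd xs = u" "last xs = v" "set xs \<subseteq> P" using g by (auto simp: greedy_path_def)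
  fix i assume l: "Suc i < length xs"
  have h0: "xs ! 0 = u" using g unfolding greedy_path_def by (metis hd_conv_nth)
  have step: "xs ! Suc i \<in> s (xs ! i) \<and> d (xs ! Suc i) v < d (xs ! i) v" using g l unfolding greedy_path_def by blast
  then show "d (xs ! Suc i) v < d (xs ! i) v" by simp
  show "xs ! Suc i \<in> s' (xs ! i)"
  proof (cases i)
    case 0 then show ?thesis using step h0 eq by simp
  next
    case (Suc j)
    have xi: "xs ! i \<in> P" using gp_set[OF g] l by simp
    have xi1: "xs ! Suc i \<in> P" using gp_set[OF g] l by simp
    have b: "d (xs ! i) v \<le> 2 - real i" using gp_bound[OF M \<open>u\<in>P\<close> \<open>v\<in>P\<close> g, of i] l by simp
    have nn: "0 \<le> d (xs ! Suc i) v" using m_nn[OF M xi1 \<open>v\<in>P\<close>] by simp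
    have "d (xs ! i) v \<le> 1" using b Suc by simp
    moreover have "d (xs ! i) v > 0" using nn step by simp
    ultimately have d1: "d (xs ! i) v = 1" using m_vals[OF M xi \<open>v\<in>P\<close>] by auto
    have "xs ! Suc i = v" using m_lt1[OF M xi1 \<open>v\<in>P\<close>] step d1 by simp
    moreover have "xs ! i \<noteq> u"
    proof
      assume "xs ! i = u"
      have "j < length xs" "Suc j < length xs" using l Suc by auto
      have "d (xs ! 1) v \<le> 2 - 1" using gp_bound[OF M \<open>u\<in>P\<close> \<open>v\<in>P\<close> g, of 1] l Suc by simp
      show False
      proof (cases j)
        case 0
        have "d (xs ! 1) v < d (xs ! 0) v" using g l Suc 0 unfolding greedy_path_def by auto
        then show False using \<open>xs ! i = u\<close> h0 Suc 0 by simp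
      next
        case (Suc k)
        have "d (xs ! i) v \<le> 2 - real i" by (fact b)
        then show False using d1 \<open>i = Suc j\<close> Suc by simp
      qed
    qed
    ultimately show ?thesis using ge xi \<open>v\<in>P\<close> d1 unfolding goodex_def by blast
  qed
qed

lemma agent_cost_cong:
  assumes M: "one_two_metric P d" and "u \<in> P" and g1: "goodex P d s u" and g2: "goodex P d s' u"
    and eq: "s u = s' u"
  shows "agent_cost Z \<alpha> P d s u = agent_cost Z \<alpha> P d s' u"
proof -
  have "stretch Z P d s u v = stretch Z P d s' u v" if "v \<in> P - {u}" for v
  proof -
    have vP: "v \<in> P" using that by simp
    have "greedy_path P d s u v xs = greedy_path P d s' u v xs" for xs
      using gp_mono[of P d u v s' s xs] gp_mono[of P d u v s s' xs] M \<open>u\<in>P\<close> vP g1 g2 eq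
      by blast
    then show ?thesis by (simp add: stretch_def)
  qed
  then show ?thesis unfolding agent_cost_def using eq by simp
qed

lemma ac_nn:
  assumes M: "one_two_metric P d" and "finite P" "u \<in> P" "Z \<ge> 0" "\<alpha> \<ge> 0"
  shows "0 \<le> agent_cost Z \<alpha> P d s u"
  unfolding agent_cost_def
  by (intro add_nonneg_nonneg sum_nonneg mult_nonneg_nonneg stretch_nn[OF M \<open>finite P\<close> \<open>u\<in>P\<close>]) (use assms in auto)

lemma ac_Z:
  assumes M: "one_two_metric P d" and "finite P" "u \<in> P" "v \<in> P" "d u v = 1" "v \<notin> s u" "Z \<ge> 0" "\<alpha> \<ge> 0"
  shows "Z \<le> agent_cost Z \<alpha> P d s u"
proof -
  have uv: "u \<noteq> v" using assms m_d0[OF M] by auto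
  have "stretch Z P d s u v \<le> (\<Sum>w\<in>P - {u}. stretch Z P d s u w)"
    by (rule member_le_sum) (use assms uv stretch_nn[OF M \<open>finite P\<close> \<open>u\<in>P\<close>] in auto)
  then have "Z \<le> (\<Sum>w\<in>P - {u}. stretch Z P d s u w)" using stretch_Z[of P d u v s Z] M assms by simp
  moreover have "0 \<le> \<alpha> * real (card (s u))" using assms by simp
  ultimately show ?thesis unfolding agent_cost_def by linarith
qed

lemma ac_full:
  assumes M: "one_two_metric P d" and "finite P" "u \<in> P" "s u = P - {u}" "\<alpha> \<ge> 0"
  shows "agent_cost Z \<alpha> P d s u \<le> real (card P) * (1 + \<alpha>)"
proof -
  have c: "card (P - {u}) \<le> card P" using assms by (simp add: card_mono)
  have "(\<Sum>w\<in>P - {u}. stretch Z P d s u w) \<le> real (card (P - {u})) * 1"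
    by (rule sum_bounded_above) (use assms stretch_le1[OF M \<open>finite P\<close> \<open>u\<in>P\<close>] in auto)
  also have "\<dots> \<le> real (card P)" using c by simp
  finally have a: "(\<Sum>w\<in>P - {u}. stretch Z P d s u w) \<le> real (card P)" .
  have b: "\<alpha> * real (card (s u)) \<le> \<alpha> * real (card P)" using c assms by (simp add: mult_left_mono)
  show ?thesis unfolding agent_cost_def using a b by (simp add: algebra_simps)
qed

lemma sc_split:
  assumes "finite P" "u \<in> P"
  shows "social_cost Z \<alpha> P d s = agent_cost Z \<alpha> P d s u + (\<Sum>w\<in>P - {u}. agent_cost Z \<alpha> P d s w)"
  unfolding social_cost_def using sum.remove[OF assms] by blast

lemma sc_ge:
  assumes M: "one_two_metric P d" and "finite P" "u \<in> P" "Z \<ge> 0" "\<alpha> \<ge> 0"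
  shows "agent_cost Z \<alpha> P d s u \<le> social_cost Z \<alpha> P d s"
proof -
  have "0 \<le> (\<Sum>w\<in>P - {u}. agent_cost Z \<alpha> P d s w)"
    by (rule sum_nonneg) (use ac_nn[OF M \<open>finite P\<close> _ assms(4,5)] in auto)
  then show ?thesis using sc_split[OF assms(2,3)] by simp
qed

lemma not_good_Z:
  assumes M: "one_two_metric P d" and "finite P" "\<not> good P d s" "Z \<ge> 0" "\<alpha> \<ge> 0"
  shows "\<exists>u\<in>P. Z \<le> agent_cost Z \<alpha> P d s u"
proof -
  obtain x v where "x \<in> P" "v \<in> P" "d x v = 1" "v \<notin> s x" using assms(3) unfolding good_def by blast
  then show ?thesis using ac_Z[OF M \<open>finite P\<close>] assms by blast
qed

lemma sc_diff:
  assumes M: "one_two_metric P d" and "finite P" "u \<in> P" "good P d s" "good P d (s(u := T))"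
  shows "social_cost Z \<alpha> P d (s(u := T)) - agent_cost Z \<alpha> P d (s(u := T)) u
       = social_cost Z \<alpha> P d s - agent_cost Z \<alpha> P d s u"
proof -
  have "agent_cost Z \<alpha> P d (s(u := T)) w = agent_cost Z \<alpha> P d s w" if "w \<in> P - {u}" for w
    by (rule agent_cost_cong[OF M]) (use that assms(4,5) in \<open>auto simp: good_def goodex_def\<close>)
  then have "(\<Sum>w\<in>P - {u}. agent_cost Z \<alpha> P d (s(u := T)) w) = (\<Sum>w\<in>P - {u}. agent_cost Z \<alpha> P d s w)"
    by (rule sum.cong[OF refl])
  then show ?thesis using sc_split[OF assms(2,3), of Z \<alpha> d s] sc_split[OF assms(2,3), of Z \<alpha> d "s(u:=T)"] by simp
qed

theorem theorem2p4:
  fixes P :: "'a set" and d :: "'a \<Rightarrow> 'a \<Rightarrow> real" and \<alpha> :: real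
  assumes "finite P" and "card P \<ge> 2" and "one_two_metric P d" and "\<alpha> > 0"
  shows "\<exists>Z0. \<forall>Z \<ge> Z0. \<forall>s.
           (nash_equilibrium Z \<alpha> P d s \<longrightarrow> social_optimum Z \<alpha> P d s) \<and>
           (social_optimum Z \<alpha> P d s \<longrightarrow> nash_equilibrium Z \<alpha> P d s)"
proof -
  note M = assms(3) and fin = assms(1)
  define B where "B = real (card P) * (1 + \<alpha>)"
  have a0: "\<alpha> \<ge> 0" using assms by simp
  have Bpos: "B > 0" using assms unfolding B_def by simp
  have nB: "B \<le> real (card P) * B" using assms Bpos by simp
  show ?thesis
  proof (intro exI[of _ "real (card P) * B + 1"] allI impI conjI)
    fix Z :: real and s assume Z: "real (card P) * B + 1 \<le> Z"
    have Z0: "Z \<ge> 0" using Z Bpos nB by linarith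
    have full_valid: "valid_profile P (\<lambda>x. P - {x})" by (simp add: valid_profile_def)
    have full_sc: "social_cost Z \<alpha> P d (\<lambda>x. P - {x}) \<le> real (card P) * B"
      unfolding social_cost_def B_def
      by (rule sum_bounded_above) (use ac_full[OF M fin _ _ a0] in auto)
    have good_upd: "good P d (s(u := P - {u}))" if "good P d s" "u \<in> P" for s u
      using that m_d0[OF M] by (auto simp: good_def)
    {
      assume NE: "nash_equilibrium Z \<alpha> P d s"
      have bnd: "agent_cost Z \<alpha> P d s u \<le> B" if "u \<in> P" for u
      proof -
        have "agent_cost Z \<alpha> P d s u \<le> agent_cost Z \<alpha> P d (s(u := P - {u})) u"
          using NE that unfolding nash_equilibrium_def by blast
        also have "\<dots> \<le> B" unfolding B_def by (rule ac_full[OF M fin that _ a0]) simp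
        finally show ?thesis .
      qed
      have gs: "good P d s"
      proof (rule ccontr)
        assume "\<not> good P d s"
        then obtain u where "u \<in> P" "Z \<le> agent_cost Z \<alpha> P d s u" using not_good_Z[OF M fin _ Z0 a0] by blast
        then show False using bnd[of u] Z nB by linarith
      qed
      have scb: "social_cost Z \<alpha> P d s \<le> real (card P) * B"
        unfolding social_cost_def by (rule sum_bounded_above) (use bnd in auto)
      show "social_optimum Z \<alpha> P d s"
        unfolding social_optimum_def
      proof (intro conjI allI impI)
        show "valid_profile P s" using NE by (simp add: nash_equilibrium_def)
        fix s' assume vs': "valid_profile P s'"
        show "social_cost Z \<alpha> P d s \<le> social_cost Z \<alpha> P d s'"
        proof (cases "good P d s'")
          case False
          then obtain u where "u \<in> P" "Z \<le> agent_cost Z \<alpha> P d s' u" using not_good_Z[OF M fin _ Z0 a0] by blast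
          then have "Z \<le> social_cost Z \<alpha> P d s'" using sc_ge[OF M fin _ Z0 a0] by (meson order_trans)
          then show ?thesis using scb Z by linarith
        next
          case True
          have "agent_cost Z \<alpha> P d s u \<le> agent_cost Z \<alpha> P d s' u" if "u \<in> P" for u
          proof -
            have "agent_cost Z \<alpha> P d s u \<le> agent_cost Z \<alpha> P d (s(u := s' u)) u"
              using NE vs' that unfolding nash_equilibrium_def valid_profile_def by blast
            also have "\<dots> = agent_cost Z \<alpha> P d s' u"
              by (rule agent_cost_cong[OF M that]) (use gs True in \<open>auto simp: good_def goodex_def\<close>)
            finally show ?thesis .
          qed
          then show ?thesis unfolding social_cost_def by (rule sum_mono)
        qed
      qed
    }
    {
      assume SO: "social_optimum Z \<alpha> P d s"
      have vs: "valid_profile P s" using SO by (simp add: social_optimum_def)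
      have gs: "good P d s"
      proof (rule ccontr)
        assume "\<not> good P d s"
        then obtain u where "u \<in> P" "Z \<le> agent_cost Z \<alpha> P d s u" using not_good_Z[OF M fin _ Z0 a0] by blast
        then have "Z \<le> social_cost Z \<alpha> P d s" using sc_ge[OF M fin _ Z0 a0] by (meson order_trans)
        moreover have "social_cost Z \<alpha> P d s \<le> social_cost Z \<alpha> P d (\<lambda>x. P - {x})"
          using SO full_valid unfolding social_optimum_def by blast
        ultimately show False using full_sc Z by linarith
      qed
      have upd_valid: "valid_profile P (s(u := T))" if "u \<in> P" "T \<subseteq> P - {u}" for u T
        using vs that unfolding valid_profile_def by auto
      show "nash_equilibrium Z \<alpha> P d s"
        unfolding nash_equilibrium_def
      proof (intro conjI ballI allI impI)
        show "valid_profile P s" by (fact vs)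
        fix u T assume u: "u \<in> P" and T: "T \<subseteq> P - {u}"
        have key: "agent_cost Z \<alpha> P d s u \<le> agent_cost Z \<alpha> P d (s(u := T)) u"
          if gT: "good P d (s(u := T))" and TT: "T \<subseteq> P - {u}" for T
        proof -
          have "social_cost Z \<alpha> P d s \<le> social_cost Z \<alpha> P d (s(u := T))"
            using SO upd_valid[OF u TT] unfolding social_optimum_def by blast
          then show ?thesis using sc_diff[OF M fin u gs gT, of Z \<alpha>] by linarith
        qed
        have bu: "agent_cost Z \<alpha> P d s u \<le> B"
        proof -
          have "agent_cost Z \<alpha> P d s u \<le> agent_cost Z \<alpha> P d (s(u := P - {u})) u"
            by (rule key) (use good_upd[OF gs u] in auto)
          also have "\<dots> \<le> B" unfolding B_def by (rule ac_full[OF M fin u _ a0]) simp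
          finally show ?thesis .
        qed
        show "agent_cost Z \<alpha> P d s u \<le> agent_cost Z \<alpha> P d (s(u := T)) u"
        proof (cases "good P d (s(u := T))")
          case True then show ?thesis using key T by blast
        next
          case False
          then obtain x v where xv: "x \<in> P" "v \<in> P" "d x v = 1" "v \<notin> (s(u := T)) x"
            unfolding good_def by blast
          have "x = u" using xv gs unfolding good_def by (cases "x = u") auto
          then have "Z \<le> agent_cost Z \<alpha> P d (s(u := T)) u"
            using ac_Z[OF M fin u xv(2), of "s(u := T)" Z \<alpha>] xv Z0 a0 by simp
          then show ?thesis using bu Z nB by linarith
        qed
      qed
    }
  qed
qed

end
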